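(* Let $n\in\mathbb{N}$, let $W$ be a subspace of $\mathcal{T}_n$, and let $V=\mathcal{T}_n/W$. Then the matrix unit ball of $V$ is operator compact.
   Context: $\mathcal{T}_n$ denotes the trace class operators on $\mathbb{C}^n$ with the operator space structure of the dual of $M_n$, and $V=\mathcal{T}_n/W$ carries the quotient operator space structure. The matrix unit ball of an operator space $V$ is the matrix set $(B_k)_k$ with $B_k$ the closed unit ball of $M_k(V)$. $\mathcal{K}$ denotes the compact operators on $\ell^2$ and $\mathcal{K}(V)=\mathcal{K}\check{\otimes}V$ the operator-space minimal tensor product (completion of $M_\infty(V)$). $\mathcal{T}$ is the trace class on $\ell^2$ as operator space dual of $\mathcal{K}$, $M_k(\mathcal{T})\cong\mathcal{CB}(\mathcal{K},M_k)$ with norm $\|\cdot\|_{\mathcal{T}}$, $M_\infty\subseteq\mathcal{T}$, and $(\sigma\otimes\mathrm{id})(x)\in M_k(V)$ is the slice map. A matrix set $\boldsymbol{X}=(X_k)$, $X_k\subseteq M_k(V)$, is operator compact if each $X_k$ is closed and there is $x\in\mathcal{K}(V)$ with $X_k\subseteq\overline{\{(\sigma\otimes\mathrm{id})(x):\sigma\in M_k(M_\infty),\|\sigma\|_{\mathcal{T}}\le1\}}$ for all $k$. *)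

theory Defs
  imports Complex_Main
begin

text \<open>Elements of T_n are complex matrices indexed by a finite type 'n
(so n = CARD('n)).  A matrix over T_n of size k is a function
nat => nat => ('n => 'n => complex), only entries with i,j < k being relevant.
Elements of M_k(V), V = T_n / W, are represented by representatives in M_k(T_n).\<close>

type_synonym 'n tn = "'n \<Rightarrow> 'n \<Rightarrow> complex"

definition opnorm :: "'i set \<Rightarrow> 'j set \<Rightarrow> ('i \<Rightarrow> 'j \<Rightarrow> complex) \<Rightarrow> real" where
  "opnorm I J A = Sup {sqrt (\<Sum>i\<in>I. (cmod (\<Sum>j\<in>J. A i j * \<xi> j))\<^sup>2) | \<xi>.
                        (\<Sum>j\<in>J. (cmod (\<xi> j))\<^sup>2) \<le> 1}"

definition is_subspace_Tn :: "'n::finite tn set \<Rightarrow> bool" where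
  "is_subspace_Tn W \<longleftrightarrow> (\<lambda>p q. 0) \<in> W \<and>
     (\<forall>x\<in>W. \<forall>y\<in>W. (\<lambda>p q. x p q + y p q) \<in> W) \<and>
     (\<forall>c::complex. \<forall>x\<in>W. (\<lambda>p q. c * x p q) \<in> W)"

text \<open>Norm of M_k(T_n) = CB(M_n, M_k): cb-norm of a |-> [<X_ij, a>], with the duality
<rho, a> = sum_{p,q} rho p q * a p q.\<close>
definition Mk_Tn_norm :: "nat \<Rightarrow> (nat \<Rightarrow> nat \<Rightarrow> 'n::finite tn) \<Rightarrow> real" where
  "Mk_Tn_norm k X = Sup {opnorm ({..<m} \<times> {..<k}) ({..<m} \<times> {..<k})
        (\<lambda>(r,i) (s,j). \<Sum>p\<in>UNIV. \<Sum>q\<in>UNIV. X i j p q * A r s p q) | m A.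
        opnorm ({..<m} \<times> (UNIV::'n set)) ({..<m} \<times> (UNIV::'n set))
          (\<lambda>(r,p) (s,q). (A::nat \<Rightarrow> nat \<Rightarrow> 'n tn) r s p q) \<le> 1}"

text \<open>Norm of M_k(T) = CB(K, M_k) for sigma with finitely supported entries (sigma in M_k(M_infinity)):
supremum over finite matrices A in M_m(M_M) (dense in M_m(K)).\<close>
definition Mk_T_norm :: "nat \<Rightarrow> (nat \<Rightarrow> nat \<Rightarrow> nat \<Rightarrow> nat \<Rightarrow> complex) \<Rightarrow> real" where
  "Mk_T_norm k \<sigma> = Sup {opnorm ({..<m} \<times> {..<k}) ({..<m} \<times> {..<k})
        (\<lambda>(r,i) (s,j). \<Sum>p<M. \<Sum>q<M. \<sigma> i j p q * A r s p q) | m M A.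
        opnorm ({..<m} \<times> {..<M}) ({..<m} \<times> {..<M})
          (\<lambda>(r,p) (s,q). (A::nat \<Rightarrow> nat \<Rightarrow> nat \<Rightarrow> nat \<Rightarrow> complex) r s p q) \<le> 1}"

text \<open>Quotient norm of M_k(V) = M_k(T_n)/M_k(W), evaluated on a representative.\<close>
definition qnorm :: "'n::finite tn set \<Rightarrow> nat \<Rightarrow> (nat \<Rightarrow> nat \<Rightarrow> 'n tn) \<Rightarrow> real" where
  "qnorm W k X = Inf {Mk_Tn_norm k (\<lambda>i j p q. X i j p q - Y i j p q) | Y.
                       \<forall>i<k. \<forall>j<k. Y i j \<in> W}"

definition mdiff :: "(nat \<Rightarrow> nat \<Rightarrow> 'n tn) \<Rightarrow> (nat \<Rightarrow> nat \<Rightarrow> 'n tn) \<Rightarrow> nat \<Rightarrow> nat \<Rightarrow> 'n tn" where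
  "mdiff X Y = (\<lambda>i j p q. X i j p q - Y i j p q)"

definition trunc :: "nat \<Rightarrow> (nat \<Rightarrow> nat \<Rightarrow> 'n tn) \<Rightarrow> nat \<Rightarrow> nat \<Rightarrow> 'n tn" where
  "trunc N x = (\<lambda>i j. if i < N \<and> j < N then x i j else (\<lambda>p q. 0))"

text \<open>x : infinite matrix over V (entries given by representatives) belongs to
K(V) = completion of M_infinity(V): its finite truncations form a Cauchy sequence.\<close>
definition in_KV :: "'n::finite tn set \<Rightarrow> (nat \<Rightarrow> nat \<Rightarrow> 'n tn) \<Rightarrow> bool" where
  "in_KV W x \<longleftrightarrow> (\<forall>\<epsilon>>0. \<exists>N0. \<forall>N\<ge>N0. \<forall>M\<ge>N0.
       qnorm W (max N M) (mdiff (trunc N x) (trunc M x)) < \<epsilon>)"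

text \<open>Slice map (sigma (x) id)(x) in M_k(V) for sigma supported in N x N.\<close>
definition slice :: "nat \<Rightarrow> (nat \<Rightarrow> nat \<Rightarrow> nat \<Rightarrow> nat \<Rightarrow> complex) \<Rightarrow> (nat \<Rightarrow> nat \<Rightarrow> 'n tn)
                      \<Rightarrow> nat \<Rightarrow> nat \<Rightarrow> 'n tn" where
  "slice N \<sigma> x = (\<lambda>i j a b. \<Sum>p<N. \<Sum>q<N. \<sigma> i j p q * x p q a b)"

definition supported_in :: "nat \<Rightarrow> (nat \<Rightarrow> nat \<Rightarrow> nat \<Rightarrow> nat \<Rightarrow> complex) \<Rightarrow> bool" where
  "supported_in N \<sigma> \<longleftrightarrow> (\<forall>i j p q. N \<le> p \<or> N \<le> q \<longrightarrow> \<sigma> i j p q = 0)"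

text \<open>A matrix set over V, given as predicates S k on representatives in M_k(T_n).
Closedness of S k in M_k(V) and containment in the closure of the slices of x.\<close>
definition operator_compact ::
  "'n::finite tn set \<Rightarrow> (nat \<Rightarrow> (nat \<Rightarrow> nat \<Rightarrow> 'n tn) \<Rightarrow> bool) \<Rightarrow> bool" where
  "operator_compact W S \<longleftrightarrow>
     (\<forall>k X. (\<forall>\<epsilon>>0. \<exists>Y. S k Y \<and> qnorm W k (mdiff X Y) < \<epsilon>) \<longrightarrow> S k X) \<and>
     (\<exists>x. in_KV W x \<and>
        (\<forall>k X. S k X \<longrightarrow>
           (\<forall>\<epsilon>>0. \<exists>N \<sigma>. supported_in N \<sigma> \<and> Mk_T_norm k \<sigma> \<le> 1 \<and>
                 qnorm W k (mdiff X (slice N \<sigma> x)) < \<epsilon>)))"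

definition matrix_unit_ball :: "'n::finite tn set \<Rightarrow> nat \<Rightarrow> (nat \<Rightarrow> nat \<Rightarrow> 'n tn) \<Rightarrow> bool" where
  "matrix_unit_ball W k X \<longleftrightarrow> qnorm W k X \<le> 1"

end

theory Submission
  imports Defs "HOL-Analysis.L2_Norm"
begin

definition osetn :: "'i set \<Rightarrow> 'j set \<Rightarrow> ('i \<Rightarrow> 'j \<Rightarrow> complex) \<Rightarrow> real set" where
  "osetn I J A = {sqrt (\<Sum>i\<in>I. (cmod (\<Sum>j\<in>J. A i j * \<xi> j))\<^sup>2) | \<xi>.
                        (\<Sum>j\<in>J. (cmod (\<xi> j))\<^sup>2) \<le> 1}"

lemma opnorm_osetn: "opnorm I J A = Sup (osetn I J A)"
  unfolding opnorm_def osetn_def by simp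

lemma osetn_ne: "osetn I J A \<noteq> {}"
  unfolding osetn_def by (rule ex_in_conv[THEN iffD1], rule exI[of _ "sqrt (\<Sum>i\<in>I. (cmod (\<Sum>j\<in>J. A i j * 0))\<^sup>2)"], rule CollectI, rule exI[of _ "\<lambda>_. 0"], simp)

lemma cmod_le_1_of_sum:
  assumes "finite J" "(\<Sum>j\<in>J. (cmod (\<xi> j))\<^sup>2) \<le> (1::real)" "j \<in> J"
  shows "cmod (\<xi> j) \<le> 1"
proof -
  have "(cmod (\<xi> j))\<^sup>2 \<le> (\<Sum>j\<in>J. (cmod (\<xi> j))\<^sup>2)"
    using assms by (intro member_le_sum) auto
  then have "(cmod (\<xi> j))\<^sup>2 \<le> 1\<^sup>2" using assms by simp
  then show ?thesis by (rule power2_le_imp_le) simp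
qed

lemma osetn_bound:
  assumes "finite I" "finite J" "v \<in> osetn I J A"
  shows "v \<le> (\<Sum>i\<in>I. \<Sum>j\<in>J. cmod (A i j))"
proof -
  obtain \<xi> where v: "v = sqrt (\<Sum>i\<in>I. (cmod (\<Sum>j\<in>J. A i j * \<xi> j))\<^sup>2)"
     and x: "(\<Sum>j\<in>J. (cmod (\<xi> j))\<^sup>2) \<le> 1"
    using assms(3) unfolding osetn_def by auto
  have "v = L2_set (\<lambda>i. cmod (\<Sum>j\<in>J. A i j * \<xi> j)) I" unfolding v L2_set_def by simp
  also have "\<dots> \<le> (\<Sum>i\<in>I. cmod (\<Sum>j\<in>J. A i j * \<xi> j))"
    by (rule L2_set_le_sum) simp
  also have "\<dots> \<le> (\<Sum>i\<in>I. \<Sum>j\<in>J. cmod (A i j))"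
  proof (rule sum_mono)
    fix i assume "i \<in> I"
    have "cmod (\<Sum>j\<in>J. A i j * \<xi> j) \<le> (\<Sum>j\<in>J. cmod (A i j * \<xi> j))"
      by (rule norm_sum)
    also have "\<dots> \<le> (\<Sum>j\<in>J. cmod (A i j))"
    proof (rule sum_mono)
      fix j assume "j \<in> J"
      then have "cmod (\<xi> j) \<le> 1" using cmod_le_1_of_sum[OF assms(2) x] by blast
      then show "cmod (A i j * \<xi> j) \<le> cmod (A i j)"
        by (simp add: norm_mult mult_left_le)
    qed
    finally show "cmod (\<Sum>j\<in>J. A i j * \<xi> j) \<le> (\<Sum>j\<in>J. cmod (A i j))" .
  qed
  finally show ?thesis .
qed

lemma osetn_bdd: "finite I \<Longrightarrow> finite J \<Longrightarrow> bdd_above (osetn I J A)"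
  using osetn_bound unfolding bdd_above_def by blast

lemma opnorm_upper:
  assumes "finite I" "finite J" "(\<Sum>j\<in>J. (cmod (\<xi> j))\<^sup>2) \<le> 1"
  shows "sqrt (\<Sum>i\<in>I. (cmod (\<Sum>j\<in>J. A i j * \<xi> j))\<^sup>2) \<le> opnorm I J A"
  unfolding opnorm_osetn
  by (rule cSup_upper[OF _ osetn_bdd[OF assms(1,2)]]) (use assms(3) in \<open>auto simp: osetn_def\<close>)

lemma opnorm_least:
  assumes "\<And>\<xi>. (\<Sum>j\<in>J. (cmod (\<xi> j))\<^sup>2) \<le> 1 \<Longrightarrow> sqrt (\<Sum>i\<in>I. (cmod (\<Sum>j\<in>J. A i j * \<xi> j))\<^sup>2) \<le> c"
  shows "opnorm I J A \<le> c"
  unfolding opnorm_osetn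
  by (rule cSup_least[OF osetn_ne]) (use assms in \<open>auto simp: osetn_def\<close>)

lemma opnorm_nonneg: "finite I \<Longrightarrow> finite J \<Longrightarrow> 0 \<le> opnorm I J A"
  using opnorm_upper[of I J "\<lambda>_. 0" A] by (smt (verit) real_sqrt_ge_zero sum_nonneg zero_le_power2 sum.neutral norm_zero power_zero_numeral mult_zero_right)

lemma opnorm_cong:
  assumes "\<And>i j. i \<in> I \<Longrightarrow> j \<in> J \<Longrightarrow> A i j = B i j"
  shows "opnorm I J A = opnorm I J B"
proof -
  have "(\<Sum>i\<in>I. (cmod (\<Sum>j\<in>J. A i j * \<xi> j))\<^sup>2) = (\<Sum>i\<in>I. (cmod (\<Sum>j\<in>J. B i j * \<xi> j))\<^sup>2)" for \<xi>
    using assms by (intro sum.cong refl arg_cong[where f="\<lambda>x. (cmod x)\<^sup>2"]) auto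
  then show ?thesis unfolding opnorm_def by simp
qed

lemma opnorm_compare:
  assumes "finite I'" "finite J'"
    and "\<And>\<xi>. (\<Sum>j\<in>J. (cmod (\<xi> j))\<^sup>2) \<le> 1 \<Longrightarrow> \<exists>\<xi>'. (\<Sum>j\<in>J'. (cmod (\<xi>' j))\<^sup>2) \<le> 1 \<and>
          (\<Sum>i\<in>I. (cmod (\<Sum>j\<in>J. B i j * \<xi> j))\<^sup>2) \<le> (\<Sum>i\<in>I'. (cmod (\<Sum>j\<in>J'. A i j * \<xi>' j))\<^sup>2)"
  shows "opnorm I J B \<le> opnorm I' J' A"
proof (rule opnorm_least)
  fix \<xi> assume "(\<Sum>j\<in>J. (cmod (\<xi> j))\<^sup>2) \<le> 1"
  then obtain \<xi>' where a: "(\<Sum>j\<in>J'. (cmod (\<xi>' j))\<^sup>2) \<le> 1" and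
     b: "(\<Sum>i\<in>I. (cmod (\<Sum>j\<in>J. B i j * \<xi> j))\<^sup>2) \<le> (\<Sum>i\<in>I'. (cmod (\<Sum>j\<in>J'. A i j * \<xi>' j))\<^sup>2)"
    using assms(3) by blast
  have "sqrt (\<Sum>i\<in>I. (cmod (\<Sum>j\<in>J. B i j * \<xi> j))\<^sup>2) \<le> sqrt (\<Sum>i\<in>I'. (cmod (\<Sum>j\<in>J'. A i j * \<xi>' j))\<^sup>2)"
    using b by simp
  also have "\<dots> \<le> opnorm I' J' A" by (rule opnorm_upper[OF assms(1,2) a])
  finally show "sqrt (\<Sum>i\<in>I. (cmod (\<Sum>j\<in>J. B i j * \<xi> j))\<^sup>2) \<le> opnorm I' J' A" .
qed

lemma opnorm_add:
  assumes "finite I" "finite J"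
  shows "opnorm I J (\<lambda>i j. A i j + B i j) \<le> opnorm I J A + opnorm I J B"
proof (rule opnorm_least)
  fix \<xi> assume x: "(\<Sum>j\<in>J. (cmod (\<xi> j))\<^sup>2) \<le> 1"
  have "sqrt (\<Sum>i\<in>I. (cmod (\<Sum>j\<in>J. (A i j + B i j) * \<xi> j))\<^sup>2)
      = L2_set (\<lambda>i. cmod ((\<Sum>j\<in>J. A i j * \<xi> j) + (\<Sum>j\<in>J. B i j * \<xi> j))) I"
    unfolding L2_set_def by (simp add: distrib_right sum.distrib)
  also have "\<dots> \<le> L2_set (\<lambda>i. cmod (\<Sum>j\<in>J. A i j * \<xi> j) + cmod (\<Sum>j\<in>J. B i j * \<xi> j)) I"
    by (rule L2_set_mono) (auto intro: norm_triangle_ineq)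
  also have "\<dots> \<le> L2_set (\<lambda>i. cmod (\<Sum>j\<in>J. A i j * \<xi> j)) I + L2_set (\<lambda>i. cmod (\<Sum>j\<in>J. B i j * \<xi> j)) I"
    by (rule L2_set_triangle_ineq)
  also have "\<dots> \<le> opnorm I J A + opnorm I J B"
    using opnorm_upper[OF assms x, of A] opnorm_upper[OF assms x, of B] unfolding L2_set_def by simp
  finally show "sqrt (\<Sum>i\<in>I. (cmod (\<Sum>j\<in>J. (A i j + B i j) * \<xi> j))\<^sup>2) \<le> opnorm I J A + opnorm I J B" .
qed

lemma opnorm_scale:
  assumes "finite I" "finite J"
  shows "opnorm I J (\<lambda>i j. c * A i j) \<le> cmod c * opnorm I J A"
proof (rule opnorm_least)
  fix \<xi> assume x: "(\<Sum>j\<in>J. (cmod (\<xi> j))\<^sup>2) \<le> 1"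
  have "sqrt (\<Sum>i\<in>I. (cmod (\<Sum>j\<in>J. (c * A i j) * \<xi> j))\<^sup>2)
      = L2_set (\<lambda>i. cmod c * cmod (\<Sum>j\<in>J. A i j * \<xi> j)) I"
    unfolding L2_set_def by (simp add: mult.assoc norm_mult flip: sum_distrib_left)
  also have "\<dots> = cmod c * L2_set (\<lambda>i. cmod (\<Sum>j\<in>J. A i j * \<xi> j)) I"
    by (rule L2_set_right_distrib[symmetric]) simp
  also have "\<dots> \<le> cmod c * opnorm I J A"
    using opnorm_upper[OF assms x, of A] unfolding L2_set_def by (simp add: mult_left_mono)
  finally show "sqrt (\<Sum>i\<in>I. (cmod (\<Sum>j\<in>J. (c * A i j) * \<xi> j))\<^sup>2) \<le> cmod c * opnorm I J A" .
qed

lemma opnorm_zero: "opnorm I J (\<lambda>i j. 0) \<le> 0"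
  by (rule opnorm_least) simp

lemma opnorm_sum:
  assumes "finite I" "finite J" "finite F"
  shows "opnorm I J (\<lambda>i j. \<Sum>x\<in>F. f x i j) \<le> (\<Sum>x\<in>F. opnorm I J (f x))"
  using assms(3)
proof (induction F rule: finite_induct)
  case empty
  then show ?case using opnorm_zero by simp
next
  case (insert a F)
  have "opnorm I J (\<lambda>i j. \<Sum>x\<in>insert a F. f x i j) = opnorm I J (\<lambda>i j. f a i j + (\<Sum>x\<in>F. f x i j))"
    using insert by simp
  also have "\<dots> \<le> opnorm I J (f a) + opnorm I J (\<lambda>i j. \<Sum>x\<in>F. f x i j)"
    by (rule opnorm_add[OF assms(1,2)])
  also have "\<dots> \<le> opnorm I J (f a) + (\<Sum>x\<in>F. opnorm I J (f x))" using insert by simp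
  finally show ?case using insert by simp
qed


lemma sum_prod: "sum f (A \<times> B) = (\<Sum>a\<in>A. \<Sum>b\<in>B. f (a,b))"
  by (simp add: sum.cartesian_product)

lemma cmod_if_sq: "(cmod (if P then a else 0))\<^sup>2 = (if P then (cmod a)\<^sup>2 else 0)"
  by simp

lemma if0_mult: "(if P then x else 0) * (y::complex) = (if P then x * y else 0)"
  by simp

lemma mult_if0: "(x::complex) * (if P then y else 0) = (if P then x * y else 0)"
  by simp

lemma single_term:
  fixes A :: "nat \<Rightarrow> nat \<Rightarrow> 'n::finite tn" and k i0 j0 :: nat and p q :: 'n
  assumes "i0 < k" "j0 < k"
    and A: "opnorm ({..<m} \<times> (UNIV::'n set)) ({..<m} \<times> (UNIV::'n set)) (\<lambda>(r,p) (s,q). A r s p q) \<le> 1"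
  shows "opnorm ({..<m} \<times> {..<k}) ({..<m} \<times> {..<k})
           (\<lambda>(r,i) (s,j). if i = i0 \<and> j = j0 then A r s p q else 0) \<le> 1"
proof -
  have "opnorm ({..<m} \<times> {..<k}) ({..<m} \<times> {..<k})
           (\<lambda>(r,i) (s,j). if i = i0 \<and> j = j0 then A r s p q else 0)
        \<le> opnorm ({..<m} \<times> (UNIV::'n set)) ({..<m} \<times> (UNIV::'n set)) (\<lambda>(r,p) (s,q). A r s p q)"
  proof (rule opnorm_compare)
    fix \<xi> :: "nat \<times> nat \<Rightarrow> complex"
    assume x: "(\<Sum>j\<in>{..<m} \<times> {..<k}. (cmod (\<xi> j))\<^sup>2) \<le> 1"
    define \<xi>' where "\<xi>' = (\<lambda>(s, q'). if q' = q then \<xi> (s, j0) else 0)"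
    have e1: "(\<Sum>j\<in>{..<m} \<times> (UNIV::'n set). (cmod (\<xi>' j))\<^sup>2) = (\<Sum>s<m. (cmod (\<xi> (s,j0)))\<^sup>2)"
      unfolding \<xi>'_def by (simp add: sum_prod cmod_if_sq)
    have e2: "(\<Sum>j\<in>{..<m} \<times> {..<k}. (cmod (\<xi> j))\<^sup>2) = (\<Sum>s<m. \<Sum>j<k. (cmod (\<xi> (s,j)))\<^sup>2)"
      by (simp add: sum_prod)
    have "(\<Sum>s<m. (cmod (\<xi> (s,j0)))\<^sup>2) \<le> (\<Sum>s<m. \<Sum>j<k. (cmod (\<xi> (s,j)))\<^sup>2)"
      by (rule sum_mono, rule member_le_sum) (use assms in auto)
    then have c1: "(\<Sum>j\<in>{..<m} \<times> (UNIV::'n set). (cmod (\<xi>' j))\<^sup>2) \<le> 1"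
      using x e1 e2 by simp
    have e3: "(\<Sum>i\<in>{..<m} \<times> {..<k}. (cmod (\<Sum>j\<in>{..<m} \<times> {..<k}.
          (\<lambda>(r,i) (s,j). if i = i0 \<and> j = j0 then A r s p q else 0) i j * \<xi> j))\<^sup>2)
       = (\<Sum>r<m. (cmod (\<Sum>s<m. A r s p q * \<xi> (s,j0)))\<^sup>2)"
    proof -
      have inner: "(\<Sum>aa<m. \<Sum>ba<k. (if b = i0 \<and> ba = j0 then A a aa p q else 0) * \<xi>(aa,ba))
          = (if b = i0 then \<Sum>s<m. A a s p q * \<xi>(s,j0) else 0)" for a b
        using assms(2) by (cases "b = i0") (simp_all add: if0_mult sum.delta)
      show ?thesis unfolding sum_prod case_prod_conv inner cmod_if_sq
        using assms(1) by simp
    qed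
    have e4: "(\<Sum>i\<in>{..<m} \<times> (UNIV::'n set). (cmod (\<Sum>j\<in>{..<m} \<times> (UNIV::'n set).
          (\<lambda>(r,p) (s,q). A r s p q) i j * \<xi>' j))\<^sup>2)
       = (\<Sum>r<m. \<Sum>p'\<in>UNIV. (cmod (\<Sum>s<m. A r s p' q * \<xi> (s,j0)))\<^sup>2)"
      unfolding \<xi>'_def sum_prod case_prod_conv mult_if0 by (simp add: sum.delta')
    have le: "(\<Sum>r<m. (cmod (\<Sum>s<m. A r s p q * \<xi> (s,j0)))\<^sup>2) \<le> (\<Sum>r<m. \<Sum>p'\<in>UNIV. (cmod (\<Sum>s<m. A r s p' q * \<xi> (s,j0)))\<^sup>2)"
      by (rule sum_mono, rule member_le_sum[where f = "\<lambda>p'. (cmod (\<Sum>s<m. A _ s p' q * \<xi> (s,j0)))\<^sup>2"]) auto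
    show "\<exists>\<xi>'. (\<Sum>j\<in>{..<m} \<times> (UNIV::'n set). (cmod (\<xi>' j))\<^sup>2) \<le> 1 \<and>
          (\<Sum>i\<in>{..<m} \<times> {..<k}. (cmod (\<Sum>j\<in>{..<m} \<times> {..<k}.
          (\<lambda>(r,i) (s,j). if i = i0 \<and> j = j0 then A r s p q else 0) i j * \<xi> j))\<^sup>2)
          \<le> (\<Sum>i\<in>{..<m} \<times> (UNIV::'n set). (cmod (\<Sum>j\<in>{..<m} \<times> (UNIV::'n set).
          (\<lambda>(r,p) (s,q). A r s p q) i j * \<xi>' j))\<^sup>2)"
      apply (rule exI[of _ \<xi>'])
      apply (rule conjI[OF c1])
      unfolding e3 e4 by (rule le)
  qed auto
  then show ?thesis using A by linarith
qed


lemma delta2: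
  assumes "i < k" "j < (k::nat)"
  shows "(\<Sum>i0<k. \<Sum>j0<k. if i = i0 \<and> j = j0 then f i0 j0 else (0::complex)) = f i j"
proof -
  have "(\<Sum>i0<k. \<Sum>j0<k. if i = i0 \<and> j = j0 then f i0 j0 else (0::complex))
     = (\<Sum>i0<k. if i = i0 then (\<Sum>j0<k. if j = j0 then f i0 j0 else 0) else 0)"
    by (intro sum.cong refl) auto
  also have "\<dots> = f i j" using assms by (simp add: sum.delta)
  finally show ?thesis .
qed

definition Aok :: "nat \<Rightarrow> (nat \<Rightarrow> nat \<Rightarrow> 'n::finite tn) \<Rightarrow> bool" where
  "Aok m A \<longleftrightarrow> opnorm ({..<m} \<times> (UNIV::'n set)) ({..<m} \<times> (UNIV::'n set)) (\<lambda>(r,p) (s,q). A r s p q) \<le> 1"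

definition bigTn :: "nat \<Rightarrow> (nat \<Rightarrow> nat \<Rightarrow> 'n::finite tn) \<Rightarrow> nat \<Rightarrow> (nat \<Rightarrow> nat \<Rightarrow> 'n tn) \<Rightarrow> real" where
  "bigTn k X m A = opnorm ({..<m} \<times> {..<k}) ({..<m} \<times> {..<k})
        (\<lambda>(r,i) (s,j). \<Sum>p\<in>UNIV. \<Sum>q\<in>UNIV. X i j p q * A r s p q)"

definition CX :: "nat \<Rightarrow> (nat \<Rightarrow> nat \<Rightarrow> 'n::finite tn) \<Rightarrow> real" where
  "CX k X = (\<Sum>p\<in>UNIV. \<Sum>q\<in>UNIV. \<Sum>i0<k. \<Sum>j0<k. cmod (X i0 j0 p q))"

lemma big_bound:
  fixes X A :: "nat \<Rightarrow> nat \<Rightarrow> 'n::finite tn"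
  assumes "Aok m A"
  shows "bigTn k X m A \<le> CX k X"
proof -
  let ?I = "{..<m} \<times> {..<k}"
  define E where "E i0 j0 p q = (\<lambda>(r,i) (s,j). if i = i0 \<and> j = j0 then A r s p q else (0::complex))" for i0 j0 :: nat and p q :: 'n
  have fin: "finite ?I" by simp
  have "bigTn k X m A = opnorm ?I ?I (\<lambda>a b. \<Sum>p\<in>UNIV. \<Sum>q\<in>UNIV. \<Sum>i0<k. \<Sum>j0<k. X i0 j0 p q * E i0 j0 p q a b)"
    unfolding bigTn_def
  proof (rule opnorm_cong)
    fix a b assume ab: "a \<in> ?I" "b \<in> ?I"
    obtain r i where a: "a = (r,i)" by (cases a)
    obtain s j where b: "b = (s,j)" by (cases b)
    have "X i j p q * A r s p q = (\<Sum>i0<k. \<Sum>j0<k. X i0 j0 p q * E i0 j0 p q a b)" for p q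
    proof -
      have "(\<Sum>i0<k. \<Sum>j0<k. X i0 j0 p q * E i0 j0 p q a b)
          = (\<Sum>i0<k. \<Sum>j0<k. if i = i0 \<and> j = j0 then X i0 j0 p q * A r s p q else 0)"
        unfolding E_def a b by (intro sum.cong refl) auto
      also have "\<dots> = X i j p q * A r s p q"
        by (rule delta2) (use ab a b in auto)
      finally show ?thesis by simp
    qed
    then show "(\<lambda>(r,i) (s,j). \<Sum>p\<in>UNIV. \<Sum>q\<in>UNIV. X i j p q * A r s p q) a b
        = (\<Sum>p\<in>UNIV. \<Sum>q\<in>UNIV. \<Sum>i0<k. \<Sum>j0<k. X i0 j0 p q * E i0 j0 p q a b)"
      unfolding a b by simp
  qed
  also have "\<dots> \<le> (\<Sum>p\<in>UNIV. opnorm ?I ?I (\<lambda>a b. \<Sum>q\<in>UNIV. \<Sum>i0<k. \<Sum>j0<k. X i0 j0 p q * E i0 j0 p q a b))"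
    by (rule opnorm_sum) auto
  also have "\<dots> \<le> (\<Sum>p\<in>UNIV. \<Sum>q\<in>UNIV. opnorm ?I ?I (\<lambda>a b. \<Sum>i0<k. \<Sum>j0<k. X i0 j0 p q * E i0 j0 p q a b))"
    by (intro sum_mono opnorm_sum) auto
  also have "\<dots> \<le> (\<Sum>p\<in>UNIV. \<Sum>q\<in>UNIV. \<Sum>i0<k. opnorm ?I ?I (\<lambda>a b. \<Sum>j0<k. X i0 j0 p q * E i0 j0 p q a b))"
    by (intro sum_mono opnorm_sum) auto
  also have "\<dots> \<le> (\<Sum>p\<in>UNIV. \<Sum>q\<in>UNIV. \<Sum>i0<k. \<Sum>j0<k. opnorm ?I ?I (\<lambda>a b. X i0 j0 p q * E i0 j0 p q a b))"
    by (intro sum_mono opnorm_sum) auto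
  also have "\<dots> \<le> (\<Sum>p\<in>UNIV. \<Sum>q\<in>UNIV. \<Sum>i0<k. \<Sum>j0<k. cmod (X i0 j0 p q))"
  proof (intro sum_mono)
    fix p q i0 j0 assume "i0 \<in> {..<k}" "j0 \<in> {..<k}"
    then have "opnorm ?I ?I (E i0 j0 p q) \<le> 1"
      unfolding E_def using single_term assms unfolding Aok_def by auto
    then show "opnorm ?I ?I (\<lambda>a b. X i0 j0 p q * E i0 j0 p q a b) \<le> cmod (X i0 j0 p q)"
      using opnorm_scale[OF fin fin, of "X i0 j0 p q" "E i0 j0 p q"]
      by (smt (verit) mult_left_le norm_ge_zero)
  qed
  finally show ?thesis unfolding CX_def .
qed

definition Tset :: "nat \<Rightarrow> (nat \<Rightarrow> nat \<Rightarrow> 'n::finite tn) \<Rightarrow> real set" where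
  "Tset k X = {opnorm ({..<m} \<times> {..<k}) ({..<m} \<times> {..<k})
        (\<lambda>(r,i) (s,j). \<Sum>p\<in>UNIV. \<Sum>q\<in>UNIV. X i j p q * A r s p q) | m A.
        opnorm ({..<m} \<times> (UNIV::'n set)) ({..<m} \<times> (UNIV::'n set))
          (\<lambda>(r,p) (s,q). (A::nat \<Rightarrow> nat \<Rightarrow> 'n tn) r s p q) \<le> 1}"

lemma Mk_Tn_Tset: "Mk_Tn_norm k X = Sup (Tset k X)"
  unfolding Mk_Tn_norm_def Tset_def by simp

lemma Tset_alt: "Tset k X = {bigTn k X m A | m A. Aok m A}"
  unfolding Tset_def bigTn_def Aok_def by simp

lemma Aok_0: "Aok 0 A"
  unfolding Aok_def by (rule opnorm_least) simp

lemma Tset_ne: "Tset k X \<noteq> {}"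
  unfolding Tset_alt using Aok_0 by blast

lemma Tset_bdd: "bdd_above (Tset k X)"
  unfolding Tset_alt bdd_above_def using big_bound by blast

lemma Mk_upper: "Aok m A \<Longrightarrow> bigTn k X m A \<le> Mk_Tn_norm k X"
  unfolding Mk_Tn_Tset by (rule cSup_upper[OF _ Tset_bdd]) (auto simp: Tset_alt)

lemma Mk_least: "(\<And>m A. Aok m A \<Longrightarrow> bigTn k X m A \<le> c) \<Longrightarrow> Mk_Tn_norm k X \<le> c"
  unfolding Mk_Tn_Tset by (rule cSup_least[OF Tset_ne]) (auto simp: Tset_alt)

lemma Mk_nonneg: "0 \<le> Mk_Tn_norm k X"
  using Mk_upper[OF Aok_0, of k X] opnorm_nonneg unfolding bigTn_def by (smt (verit) finite_SigmaI finite_lessThan)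

lemma Mk_add:
  fixes X Y :: "nat \<Rightarrow> nat \<Rightarrow> 'n::finite tn"
  shows "Mk_Tn_norm k (\<lambda>i j p q. X i j p q + Y i j p q) \<le> Mk_Tn_norm k X + Mk_Tn_norm k Y"
proof (rule Mk_least)
  fix m and A :: "nat \<Rightarrow> nat \<Rightarrow> 'n tn" assume A: "Aok m A"
  let ?I = "{..<m} \<times> {..<k}"
  have "bigTn k (\<lambda>i j p q. X i j p q + Y i j p q) m A =
     opnorm ?I ?I (\<lambda>a b. (\<lambda>(r,i) (s,j). \<Sum>p\<in>UNIV. \<Sum>q\<in>UNIV. X i j p q * A r s p q) a b
                        + (\<lambda>(r,i) (s,j). \<Sum>p\<in>UNIV. \<Sum>q\<in>UNIV. Y i j p q * A r s p q) a b)"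
    unfolding bigTn_def
    by (rule opnorm_cong) (auto simp: distrib_right sum.distrib)
  also have "\<dots> \<le> bigTn k X m A + bigTn k Y m A"
    unfolding bigTn_def by (rule opnorm_add) auto
  also have "\<dots> \<le> Mk_Tn_norm k X + Mk_Tn_norm k Y"
    using Mk_upper[OF A] by (simp add: add_mono)
  finally show "bigTn k (\<lambda>i j p q. X i j p q + Y i j p q) m A \<le> Mk_Tn_norm k X + Mk_Tn_norm k Y" .
qed

lemma Mk_scale:
  fixes X :: "nat \<Rightarrow> nat \<Rightarrow> 'n::finite tn"
  shows "Mk_Tn_norm k (\<lambda>i j p q. c * X i j p q) \<le> cmod c * Mk_Tn_norm k X"
proof (rule Mk_least)
  fix m and A :: "nat \<Rightarrow> nat \<Rightarrow> 'n tn" assume A: "Aok m A"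
  let ?I = "{..<m} \<times> {..<k}"
  have "bigTn k (\<lambda>i j p q. c * X i j p q) m A =
     opnorm ?I ?I (\<lambda>a b. c * (\<lambda>(r,i) (s,j). \<Sum>p\<in>UNIV. \<Sum>q\<in>UNIV. X i j p q * A r s p q) a b)"
    unfolding bigTn_def
    by (rule opnorm_cong) (auto simp: sum_distrib_left mult.assoc)
  also have "\<dots> \<le> cmod c * bigTn k X m A"
    unfolding bigTn_def by (rule opnorm_scale) auto
  also have "\<dots> \<le> cmod c * Mk_Tn_norm k X"
    using Mk_upper[OF A] by (simp add: mult_left_mono)
  finally show "bigTn k (\<lambda>i j p q. c * X i j p q) m A \<le> cmod c * Mk_Tn_norm k X" .
qed

lemma Mk_zero: "Mk_Tn_norm k (\<lambda>i j (p::'n::finite) (q::'n). 0::complex) \<le> (0::real)"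
proof (rule Mk_least)
  fix m and A :: "nat \<Rightarrow> nat \<Rightarrow> 'n tn"
  show "bigTn k (\<lambda>i j p q. 0) m A \<le> 0"
    unfolding bigTn_def using opnorm_zero by (simp add: case_prod_beta')
qed


definition Qset :: "'n::finite tn set \<Rightarrow> nat \<Rightarrow> (nat \<Rightarrow> nat \<Rightarrow> 'n tn) \<Rightarrow> real set" where
  "Qset W k X = {Mk_Tn_norm k (\<lambda>i j p q. X i j p q - Y i j p q) | Y.
                       \<forall>i<k. \<forall>j<k. Y i j \<in> W}"

lemma qnorm_Qset: "qnorm W k X = Inf (Qset W k X)"
  unfolding qnorm_def Qset_def by simp

lemma Qset_ne: assumes "is_subspace_Tn W" shows "Qset W k X \<noteq> {}"
proof -
  have "(\<lambda>p q. 0) \<in> W" using assms unfolding is_subspace_Tn_def by simp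
  then have "Mk_Tn_norm k (\<lambda>i j p q. X i j p q - (\<lambda>i j p q. 0) i j p q) \<in> Qset W k X"
    unfolding Qset_def by (intro CollectI exI[of _ "\<lambda>i j p q. 0"]) simp
  then show ?thesis by blast
qed

lemma Qset_bdd: "bdd_below (Qset W k X)"
  unfolding Qset_def bdd_below_def using Mk_nonneg by blast

lemma qnorm_le:
  assumes "\<forall>i<k. \<forall>j<k. Y i j \<in> W"
  shows "qnorm W k X \<le> Mk_Tn_norm k (\<lambda>i j p q. X i j p q - Y i j p q)"
  unfolding qnorm_Qset by (rule cInf_lower[OF _ Qset_bdd]) (use assms in \<open>auto simp: Qset_def\<close>)

lemma qnorm_nonneg: "is_subspace_Tn W \<Longrightarrow> 0 \<le> qnorm W k X"
  unfolding qnorm_Qset by (rule cInf_greatest[OF Qset_ne]) (auto simp: Qset_def Mk_nonneg)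

lemma qnorm_approx:
  assumes "is_subspace_Tn W" "0 < e"
  shows "\<exists>Y. (\<forall>i<k. \<forall>j<k. Y i j \<in> W) \<and> Mk_Tn_norm k (\<lambda>i j p q. X i j p q - Y i j p q) < qnorm W k X + e"
proof -
  have "Inf (Qset W k X) < qnorm W k X + e" using assms(2) unfolding qnorm_Qset by simp
  then obtain v where "v \<in> Qset W k X" "v < qnorm W k X + e"
    using cInf_lessD[OF Qset_ne[OF assms(1)]] by blast
  then show ?thesis unfolding Qset_def by blast
qed

lemma qnorm_triangle:
  assumes W: "is_subspace_Tn W"
  shows "qnorm W k X \<le> qnorm W k Z + qnorm W k (mdiff X Z)"
proof (rule field_le_epsilon)
  fix e :: real assume e: "0 < e"
  obtain Y1 where Y1: "\<forall>i<k. \<forall>j<k. Y1 i j \<in> W"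
    "Mk_Tn_norm k (\<lambda>i j p q. Z i j p q - Y1 i j p q) < qnorm W k Z + e/2"
    using qnorm_approx[OF W, where e="e/2" and k=k and X=Z] e by (meson half_gt_zero)
  obtain Y2 where Y2: "\<forall>i<k. \<forall>j<k. Y2 i j \<in> W"
    "Mk_Tn_norm k (\<lambda>i j p q. mdiff X Z i j p q - Y2 i j p q) < qnorm W k (mdiff X Z) + e/2"
    using qnorm_approx[OF W, where e="e/2" and k=k and X="mdiff X Z"] e by (meson half_gt_zero)
  define Y where "Y = (\<lambda>i j p q. Y1 i j p q + Y2 i j p q)"
  have YW: "\<forall>i<k. \<forall>j<k. Y i j \<in> W"
  proof (intro allI impI)
    fix i j assume "i < k" "j < k"
    then have "Y1 i j \<in> W" "Y2 i j \<in> W" using Y1(1) Y2(1) by auto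
    then have "(\<lambda>p q. Y1 i j p q + Y2 i j p q) \<in> W" using W unfolding is_subspace_Tn_def by blast
    then show "Y i j \<in> W" unfolding Y_def .
  qed
  have eq: "(\<lambda>i j p q. X i j p q - Y i j p q) =
     (\<lambda>i j p q. (Z i j p q - Y1 i j p q) + (mdiff X Z i j p q - Y2 i j p q))"
    unfolding Y_def mdiff_def by (simp add: algebra_simps)
  have "qnorm W k X \<le> Mk_Tn_norm k (\<lambda>i j p q. X i j p q - Y i j p q)"
    by (rule qnorm_le[OF YW])
  also have "\<dots> \<le> Mk_Tn_norm k (\<lambda>i j p q. Z i j p q - Y1 i j p q) + Mk_Tn_norm k (\<lambda>i j p q. mdiff X Z i j p q - Y2 i j p q)"
    unfolding eq by (rule Mk_add)
  finally show "qnorm W k X \<le> qnorm W k Z + qnorm W k (mdiff X Z) + e"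
    using Y1(2) Y2(2) by linarith
qed

lemma part1:
  assumes W: "is_subspace_Tn W"
    and h: "\<forall>\<epsilon>>0. \<exists>Y. matrix_unit_ball W k Y \<and> qnorm W k (mdiff X Y) < \<epsilon>"
  shows "matrix_unit_ball W k X"
  unfolding matrix_unit_ball_def
proof (rule field_le_epsilon)
  fix e :: real assume "0 < e"
  then obtain Y where "qnorm W k Y \<le> 1" "qnorm W k (mdiff X Y) < e"
    using h unfolding matrix_unit_ball_def by blast
  then show "qnorm W k X \<le> 1 + e" using qnorm_triangle[OF W, of k X Y] by linarith
qed


lemma sum_lt_if: "(\<Sum>q<(M::nat). if q < n then f q else 0) = (\<Sum>q<min M n. (f q :: 'a::comm_monoid_add))"
proof -
  have "(\<Sum>q<min M n. f q) = sum f ({..<M} \<inter> {..<n})"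
    by (intro sum.cong refl) auto
  also have "\<dots> = (\<Sum>q<M. if q < n then f q else 0)" by (subst sum.inter_restrict) auto
  finally show ?thesis by simp
qed

lemma sum_lt_if': "(\<Sum>q<(n::nat). if q < M then f q else 0) = (\<Sum>q<min M n. (f q :: 'a::comm_monoid_add))"
  using sum_lt_if[where M=n and n=M and f=f] by (simp add: min.commute)

definition xg :: "(nat \<Rightarrow> 'n::finite) \<Rightarrow> nat \<Rightarrow> nat \<Rightarrow> 'n tn" where
  "xg g = (\<lambda>p q. if p < card (UNIV::'n set) \<and> q < card (UNIV::'n set) then (\<lambda>a b. if a = g p \<and> b = g q then 1 else 0) else (\<lambda>a b. 0))"

definition \<sigma>g :: "(nat \<Rightarrow> 'n::finite) \<Rightarrow> (nat \<Rightarrow> nat \<Rightarrow> 'n tn) \<Rightarrow> nat \<Rightarrow> nat \<Rightarrow> nat \<Rightarrow> nat \<Rightarrow> complex" where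
  "\<sigma>g g Z = (\<lambda>i j p q. if p < card (UNIV::'n set) \<and> q < card (UNIV::'n set) then Z i j (g p) (g q) else 0)"

lemma reidx:
  assumes "bij_betw g {..<card (UNIV::'n set)} (UNIV::'n::finite set)"
  shows "(\<Sum>a\<in>(UNIV::'n set). f a) = (\<Sum>p<card (UNIV::'n set). (f (g p) :: 'a::comm_monoid_add))"
  using sum.reindex_bij_betw[OF assms, of f] by simp

lemma slice_eq:
  assumes g: "bij_betw g {..<card (UNIV::'n set)} (UNIV::'n::finite set)"
  shows "slice (card (UNIV::'n set)) (\<sigma>g g Z) (xg g) = Z"
proof (intro ext)
  fix i j and a b :: 'n
  let ?n = "card (UNIV::'n set)"
  have "slice ?n (\<sigma>g g Z) (xg g) i j a b =
     (\<Sum>p<?n. \<Sum>q<?n. Z i j (g p) (g q) * (if a = g p \<and> b = g q then 1 else 0))"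
    unfolding slice_def \<sigma>g_def xg_def by (intro sum.cong refl) auto
  also have "\<dots> = (\<Sum>a'\<in>UNIV. \<Sum>b'\<in>UNIV. Z i j a' b' * (if a = a' \<and> b = b' then 1 else 0))"
    by (simp add: reidx[OF g])
  also have "\<dots> = (\<Sum>a'\<in>UNIV. if a = a' then Z i j a' b else 0)"
    by (intro sum.cong refl) (auto simp: mult_if0 sum.delta)
  also have "\<dots> = Z i j a b" by (simp add: sum.delta)
  finally show "slice ?n (\<sigma>g g Z) (xg g) i j a b = Z i j a b" .
qed

lemma xg_KV:
  fixes g :: "nat \<Rightarrow> 'n::finite"
  assumes W: "is_subspace_Tn W"
  shows "in_KV W (xg g)"
  unfolding in_KV_def
proof (intro allI impI exI[of _ "card (UNIV::'n set)"])
  fix e :: real and N M assume e: "0 < e" and NM: "card (UNIV::'n set) \<le> N" "card (UNIV::'n set) \<le> M"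
  have z: "mdiff (trunc N (xg g)) (trunc M (xg g)) = (\<lambda>i j p q. 0)"
    using NM unfolding mdiff_def trunc_def xg_def by (intro ext) auto
  have W0: "(\<lambda>p q. 0) \<in> W" using W unfolding is_subspace_Tn_def by simp
  have "qnorm W (max N M) (\<lambda>i j (p::'n) q. 0) \<le> Mk_Tn_norm (max N M) (\<lambda>i j (p::'n) q. (0::complex) - 0)"
    using qnorm_le[where Y="\<lambda>i j p q. 0" and k="max N M" and X="\<lambda>i j p q. 0" and W=W] W0 by simp
  also have "\<dots> \<le> 0" using Mk_zero by simp
  finally show "qnorm W (max N M) (mdiff (trunc N (xg g)) (trunc M (xg g))) < e" using z e by simp
qed


lemma sum_if_const: "(\<Sum>x\<in>S. if P then f x else 0) = (if P then (\<Sum>x\<in>S. f x) else (0::'a::comm_monoid_add))"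
  by simp

lemma compress:
  fixes g :: "nat \<Rightarrow> 'n::finite" and A :: "nat \<Rightarrow> nat \<Rightarrow> nat \<Rightarrow> nat \<Rightarrow> complex"
  assumes g: "bij_betw g {..<card (UNIV::'n set)} (UNIV::'n set)"
  defines "n \<equiv> card (UNIV::'n set)"
  defines "h \<equiv> inv_into {..<n} g"
  shows "opnorm ({..<m} \<times> (UNIV::'n set)) ({..<m} \<times> (UNIV::'n set))
           (\<lambda>(r,a) (s,b). if h a < M \<and> h b < M then A r s (h a) (h b) else 0)
         \<le> opnorm ({..<m} \<times> {..<M}) ({..<m} \<times> {..<M}) (\<lambda>(r,p) (s,q). A r s p q)"
proof (rule opnorm_compare)
  have g': "bij_betw g {..<n} (UNIV::'n set)" using g unfolding n_def .
  have hg: "h (g p) = p" if "p < n" for p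
    unfolding h_def using bij_betw_imp_inj_on[OF g'] that by (simp add: inv_into_f_f)
  fix \<xi> :: "nat \<times> 'n \<Rightarrow> complex"
  assume x: "(\<Sum>j\<in>{..<m} \<times> (UNIV::'n set). (cmod (\<xi> j))\<^sup>2) \<le> 1"
  define \<xi>' where "\<xi>' = (\<lambda>(s,q). if q < n then \<xi> (s, g q) else 0)"
  define F where "F r p = (\<Sum>s<m. \<Sum>q<min M n. A r s p q * \<xi> (s, g q))" for r p
  have "(\<Sum>j\<in>{..<m} \<times> {..<M}. (cmod (\<xi>' j))\<^sup>2) = (\<Sum>s<m. \<Sum>q<M. if q < n then (cmod (\<xi> (s, g q)))\<^sup>2 else 0)"
    unfolding \<xi>'_def sum_prod case_prod_conv cmod_if_sq ..
  also have "\<dots> = (\<Sum>s<m. \<Sum>q<min M n. (cmod (\<xi> (s, g q)))\<^sup>2)"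
    unfolding sum_lt_if ..
  also have "\<dots> \<le> (\<Sum>s<m. \<Sum>q<n. (cmod (\<xi> (s, g q)))\<^sup>2)"
    by (intro sum_mono sum_mono2) auto
  also have "\<dots> = (\<Sum>j\<in>{..<m} \<times> (UNIV::'n set). (cmod (\<xi> j))\<^sup>2)"
    unfolding sum_prod reidx[OF g, folded n_def] ..
  finally have c1: "(\<Sum>j\<in>{..<m} \<times> {..<M}. (cmod (\<xi>' j))\<^sup>2) \<le> 1" using x by linarith
  have inner: "(\<Sum>s<m. \<Sum>q<n. (if h (g p) < M \<and> h (g q) < M then A r s (h (g p)) (h (g q)) else 0) * \<xi> (s, g q))
     = (if p < M then F r p else 0)" if "p < n" for r p
  proof -
    have "(\<Sum>s<m. \<Sum>q<n. (if h (g p) < M \<and> h (g q) < M then A r s (h (g p)) (h (g q)) else 0) * \<xi> (s, g q))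
       = (\<Sum>s<m. if p < M then (\<Sum>q<n. if q < M then A r s p q * \<xi> (s, g q) else 0) else 0)"
      using that hg by (auto intro!: sum.cong simp: if0_mult)
    also have "\<dots> = (if p < M then F r p else 0)"
      unfolding sum_if_const sum_lt_if' F_def ..
    finally show ?thesis .
  qed
  have e3: "(\<Sum>i\<in>{..<m} \<times> (UNIV::'n set). (cmod (\<Sum>j\<in>{..<m} \<times> (UNIV::'n set).
          (\<lambda>(r,a) (s,b). if h a < M \<and> h b < M then A r s (h a) (h b) else 0) i j * \<xi> j))\<^sup>2)
       = (\<Sum>r<m. \<Sum>p<min M n. (cmod (F r p))\<^sup>2)"
  proof -
    have "(\<Sum>i\<in>{..<m} \<times> (UNIV::'n set). (cmod (\<Sum>j\<in>{..<m} \<times> (UNIV::'n set).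
          (\<lambda>(r,a) (s,b). if h a < M \<and> h b < M then A r s (h a) (h b) else 0) i j * \<xi> j))\<^sup>2)
      = (\<Sum>r<m. \<Sum>p<n. (cmod (\<Sum>s<m. \<Sum>q<n. (if h (g p) < M \<and> h (g q) < M then A r s (h (g p)) (h (g q)) else 0) * \<xi> (s, g q)))\<^sup>2)"
      unfolding sum_prod case_prod_conv reidx[OF g, folded n_def] ..
    also have "\<dots> = (\<Sum>r<m. \<Sum>p<n. if p < M then (cmod (F r p))\<^sup>2 else 0)"
      by (intro sum.cong refl) (simp add: inner)
    also have "\<dots> = (\<Sum>r<m. \<Sum>p<min M n. (cmod (F r p))\<^sup>2)"
      unfolding sum_lt_if' ..
    finally show ?thesis .
  qed
  have e4: "(\<Sum>i\<in>{..<m} \<times> {..<M}. (cmod (\<Sum>j\<in>{..<m} \<times> {..<M}.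
          (\<lambda>(r,p) (s,q). A r s p q) i j * \<xi>' j))\<^sup>2)
       = (\<Sum>r<m. \<Sum>p<M. (cmod (F r p))\<^sup>2)"
  proof -
    have "(\<Sum>i\<in>{..<m} \<times> {..<M}. (cmod (\<Sum>j\<in>{..<m} \<times> {..<M}.
          (\<lambda>(r,p) (s,q). A r s p q) i j * \<xi>' j))\<^sup>2)
       = (\<Sum>r<m. \<Sum>p<M. (cmod (\<Sum>s<m. \<Sum>q<M. if q < n then A r s p q * \<xi> (s, g q) else 0))\<^sup>2)"
      unfolding sum_prod case_prod_conv \<xi>'_def mult_if0 ..
    also have "\<dots> = (\<Sum>r<m. \<Sum>p<M. (cmod (F r p))\<^sup>2)"
      unfolding sum_lt_if F_def ..
    finally show ?thesis .
  qed
  have le: "(\<Sum>r<m. \<Sum>p<min M n. (cmod (F r p))\<^sup>2) \<le> (\<Sum>r<m. \<Sum>p<M. (cmod (F r p))\<^sup>2)"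
    by (intro sum_mono sum_mono2) auto
  show "\<exists>\<xi>'. (\<Sum>j\<in>{..<m} \<times> {..<M}. (cmod (\<xi>' j))\<^sup>2) \<le> 1 \<and>
          (\<Sum>i\<in>{..<m} \<times> (UNIV::'n set). (cmod (\<Sum>j\<in>{..<m} \<times> (UNIV::'n set).
          (\<lambda>(r,a) (s,b). if h a < M \<and> h b < M then A r s (h a) (h b) else 0) i j * \<xi> j))\<^sup>2)
          \<le> (\<Sum>i\<in>{..<m} \<times> {..<M}. (cmod (\<Sum>j\<in>{..<m} \<times> {..<M}.
          (\<lambda>(r,p) (s,q). A r s p q) i j * \<xi>' j))\<^sup>2)"
    apply (rule exI[of _ \<xi>'])
    apply (rule conjI[OF c1])
    unfolding e3 e4 by (rule le)
qed auto


lemma sigma_norm: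
  fixes g :: "nat \<Rightarrow> 'n::finite" and Z :: "nat \<Rightarrow> nat \<Rightarrow> 'n tn"
  assumes g: "bij_betw g {..<card (UNIV::'n set)} (UNIV::'n set)"
  shows "Mk_T_norm k (\<sigma>g g Z) \<le> Mk_Tn_norm k Z"
  unfolding Mk_T_norm_def
proof (rule cSup_least)
  have "opnorm ({..<0::nat} \<times> {..<0::nat}) ({..<0::nat} \<times> {..<0::nat}) (\<lambda>(r,p) (s,q). (\<lambda>r s p q. 0::complex) r s p q) \<le> 1" (is ?z0)
    by (rule opnorm_least) simp
  then have z0: ?z0 .
  show "{opnorm ({..<m} \<times> {..<k}) ({..<m} \<times> {..<k})
        (\<lambda>(r,i) (s,j). \<Sum>p<M. \<Sum>q<M. \<sigma>g g Z i j p q * A r s p q) | m M A.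
        opnorm ({..<m} \<times> {..<M}) ({..<m} \<times> {..<M})
          (\<lambda>(r,p) (s,q). (A::nat \<Rightarrow> nat \<Rightarrow> nat \<Rightarrow> nat \<Rightarrow> complex) r s p q) \<le> 1} \<noteq> {}"
    unfolding ex_in_conv[symmetric] mem_Collect_eq by (rule exI, rule exI, rule exI, rule exI, rule conjI[OF refl], rule z0)
next
  fix v assume "v \<in> {opnorm ({..<m} \<times> {..<k}) ({..<m} \<times> {..<k})
        (\<lambda>(r,i) (s,j). \<Sum>p<M. \<Sum>q<M. \<sigma>g g Z i j p q * A r s p q) | m M A.
        opnorm ({..<m} \<times> {..<M}) ({..<m} \<times> {..<M})
          (\<lambda>(r,p) (s,q). (A::nat \<Rightarrow> nat \<Rightarrow> nat \<Rightarrow> nat \<Rightarrow> complex) r s p q) \<le> 1}"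
  then obtain m M A where v: "v = opnorm ({..<m} \<times> {..<k}) ({..<m} \<times> {..<k})
        (\<lambda>(r,i) (s,j). \<Sum>p<M. \<Sum>q<M. \<sigma>g g Z i j p q * A r s p q)"
     and hA: "opnorm ({..<m} \<times> {..<M}) ({..<m} \<times> {..<M})
          (\<lambda>(r,p) (s,q). (A::nat \<Rightarrow> nat \<Rightarrow> nat \<Rightarrow> nat \<Rightarrow> complex) r s p q) \<le> 1"
    by (elim CollectE exE conjE) (rule that, assumption+)
  define n where "n = card (UNIV::'n set)"
  define h where "h = inv_into {..<n} g"
  have g': "bij_betw g {..<n} (UNIV::'n set)" using g unfolding n_def .
  have hg: "h (g p) = p" if "p < n" for p
    unfolding h_def using bij_betw_imp_inj_on[OF g'] that by (simp add: inv_into_f_f)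
  define A' where "A' = (\<lambda>r s a b. if h a < M \<and> h b < M then A r s (h a) (h b) else 0)"
  have "Aok m A'"
    unfolding Aok_def A'_def h_def n_def using compress[OF g, of m M A] hA by simp
  have entry: "(\<Sum>p<M. \<Sum>q<M. \<sigma>g g Z i j p q * A r s p q) = (\<Sum>a\<in>UNIV. \<Sum>b\<in>UNIV. Z i j a b * A' r s a b)" for i j r s
  proof -
    have "(\<Sum>a\<in>UNIV. \<Sum>b\<in>UNIV. Z i j a b * A' r s a b)
       = (\<Sum>p<n. \<Sum>q<n. Z i j (g p) (g q) * A' r s (g p) (g q))"
      unfolding reidx[OF g, folded n_def] ..
    also have "\<dots> = (\<Sum>p<n. if p < M then (\<Sum>q<n. if q < M then Z i j (g p) (g q) * A r s p q else 0) else 0)"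
      unfolding A'_def using hg by (auto intro!: sum.cong)
    also have "\<dots> = (\<Sum>p<min M n. \<Sum>q<min M n. Z i j (g p) (g q) * A r s p q)"
      unfolding sum_lt_if' ..
    finally have r: "(\<Sum>a\<in>UNIV. \<Sum>b\<in>UNIV. Z i j a b * A' r s a b) = (\<Sum>p<min M n. \<Sum>q<min M n. Z i j (g p) (g q) * A r s p q)" .
    have "(\<Sum>p<M. \<Sum>q<M. \<sigma>g g Z i j p q * A r s p q)
       = (\<Sum>p<M. if p < n then (\<Sum>q<M. if q < n then Z i j (g p) (g q) * A r s p q else 0) else 0)"
      unfolding \<sigma>g_def n_def by (auto intro!: sum.cong)
    also have "\<dots> = (\<Sum>p<min M n. \<Sum>q<min M n. Z i j (g p) (g q) * A r s p q)"
      unfolding sum_lt_if ..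
    finally show ?thesis using r by simp
  qed
  have "v = bigTn k Z m A'"
    unfolding v bigTn_def by (rule opnorm_cong) (auto simp: entry)
  also have "\<dots> \<le> Mk_Tn_norm k Z" by (rule Mk_upper[OF \<open>Aok m A'\<close>])
  finally show "v \<le> Mk_Tn_norm k Z" .
qed

theorem lemma6p1:
  fixes W :: "'n::finite tn set"
  assumes "is_subspace_Tn W"
  shows "operator_compact W (matrix_unit_ball W)"
proof -
  note W = assms
  obtain g :: "nat \<Rightarrow> 'n" where g: "bij_betw g {..<card (UNIV::'n set)} (UNIV::'n set)"
    using ex_bij_betw_nat_finite[of "UNIV::'n set"] by (auto simp: atLeast0LessThan)
  have P2: "\<forall>\<epsilon>>0. \<exists>N \<sigma>. supported_in N \<sigma> \<and> Mk_T_norm k \<sigma> \<le> 1 \<and>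
                 qnorm W k (mdiff X (slice N \<sigma> (xg g))) < \<epsilon>"
    if X: "matrix_unit_ball W k X" for k X
  proof (intro allI impI)
    fix e :: real assume e: "0 < e"
    obtain Y where Y: "\<forall>i<k. \<forall>j<k. Y i j \<in> W"
      "Mk_Tn_norm k (\<lambda>i j p q. X i j p q - Y i j p q) < qnorm W k X + e"
      using qnorm_approx[OF W e, of k X] by blast
    define D where "D = Mk_Tn_norm k (\<lambda>i j p q. X i j p q - Y i j p q)"
    have D1: "D < 1 + e" using Y(2) X unfolding D_def matrix_unit_ball_def by linarith
    have D0: "0 \<le> D" unfolding D_def by (rule Mk_nonneg)
    define t :: real where "t = 1 / (1 + e)"
    have t0: "0 < t" "t < 1" and t1: "t * (1 + e) = 1" using e unfolding t_def by auto
    define Z where "Z = (\<lambda>i j p q. complex_of_real t * (X i j p q - Y i j p q))"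
    have "Mk_T_norm k (\<sigma>g g Z) \<le> Mk_Tn_norm k Z" by (rule sigma_norm[OF g])
    also have "\<dots> \<le> cmod (complex_of_real t) * D" unfolding Z_def D_def by (rule Mk_scale)
    also have "\<dots> = t * D" using t0 by simp
    also have "\<dots> \<le> 1" using D1 t0 t1 by (smt (verit) mult_strict_left_mono)
    finally have n1: "Mk_T_norm k (\<sigma>g g Z) \<le> 1" .
    have sup: "supported_in (card (UNIV::'n set)) (\<sigma>g g Z)"
      unfolding supported_in_def \<sigma>g_def by auto
    have eq: "(\<lambda>i j p q. mdiff X Z i j p q - Y i j p q) = (\<lambda>i j p q. complex_of_real (1 - t) * (X i j p q - Y i j p q))"
      unfolding mdiff_def Z_def by (intro ext) (simp add: algebra_simps)
    have "qnorm W k (mdiff X (slice (card (UNIV::'n set)) (\<sigma>g g Z) (xg g))) = qnorm W k (mdiff X Z)"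
      by (simp add: slice_eq[OF g])
    also have "\<dots> \<le> Mk_Tn_norm k (\<lambda>i j p q. mdiff X Z i j p q - Y i j p q)"
      by (rule qnorm_le[OF Y(1)])
    also have "\<dots> \<le> cmod (complex_of_real (1 - t)) * D" unfolding eq D_def by (rule Mk_scale)
    also have "\<dots> = (1 - t) * D" unfolding norm_of_real using t0 by simp
    also have "\<dots> < (1 - t) * (1 + e)" using D1 t0 by (intro mult_strict_left_mono) auto
    also have "\<dots> = e" using t1 by (simp add: algebra_simps)
    finally show "\<exists>N \<sigma>. supported_in N \<sigma> \<and> Mk_T_norm k \<sigma> \<le> 1 \<and>
                 qnorm W k (mdiff X (slice N \<sigma> (xg g))) < e"
      using sup n1 by blast
  qed
  show ?thesis
    unfolding operator_compact_def
  proof (intro conjI allI impI exI[of _ "xg g"])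
    fix k X assume "\<forall>\<epsilon>>0. \<exists>Y. matrix_unit_ball W k Y \<and> qnorm W k (mdiff X Y) < \<epsilon>"
    then show "matrix_unit_ball W k X" by (rule part1[OF W])
  next
    show "in_KV W (xg g)" by (rule xg_KV[OF W])
  next
    fix k X and e :: real assume "matrix_unit_ball W k X" "0 < e"
    then show "\<exists>N \<sigma>. supported_in N \<sigma> \<and> Mk_T_norm k \<sigma> \<le> 1 \<and>
                 qnorm W k (mdiff X (slice N \<sigma> (xg g))) < e" using P2 by blast
  qed
qed

end
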